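(* Consider one round $t+1$ of the $(6,3)$-majority algorithm, with a fixed set of defined nodes at the end of round $t$ and a fixed set of blocked nodes in round $t+1$. Compare two assignments of values in $\{0,1\}$ to these defined nodes, with signed imbalances $\Delta_t$ and $\Delta'_t$ satisfying $\Delta_t\ge\Delta'_t\ge 0$. Then the resulting imbalance after round $t+1$ in the first case stochastically dominates that in the second case: $\Delta_{t+1}\succeq\Delta'_{t+1}$.
   Context: $(k,\ell)$-majority algorithm on $n$ fully interconnected nodes in synchronous rounds: each node $u$ has $x_u\in\{0,1,\bot\}$, and $u$ is defined iff $x_u\neq\bot$. In each round: if $u$ received fewer than $\ell$ values from the previous round or is blocked, it sets $x_u:=\bot$ and skips the rest of the round; otherwise it picks $\ell$ of the received values uniformly at random, sets $x_u$ to their majority, and sends $x_u$ to $k$ nodes chosen independently and uniformly at random. Blocked nodes neither send nor receive messages in that round. Notation: $X_t,Y_t$ are the numbers of nodes with value $0$, resp. $1$, at the end of round $t$, and the signed imbalance is $\Delta_t=(Y_t-X_t)/2$. A random variable $Z$ stochastically dominates $Z'$, written $Z\succeq Z'$, if $\Pr[Z\ge x]\ge\Pr[Z'\ge x]$ for all $x$. *)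

theory Defs
  imports "HOL-Probability.Probability"
begin

text \<open>Nodes are 0,...,n-1. Value 1 is True, value 0 is False; an undefined node
  (value bottom) is None. A message is identified by a pair (u, j): the j-th copy
  (j < k) of the value of the defined node u, sent in round t.\<close>

definition messages :: "nat \<Rightarrow> nat set \<Rightarrow> (nat \<times> nat) set" where
  "messages k D = D \<times> {..<k}"

definition majority_of :: "nat \<Rightarrow> (nat \<Rightarrow> bool) \<Rightarrow> (nat \<times> nat) set \<Rightarrow> bool" where
  "majority_of l x S = (l < 2 * card {m \<in> S. x (fst m)})"

text \<open>Distribution of the node values at the end of round t+1 of the (k,l)-majority
  algorithm, given the set D of defined nodes at the end of round t with their values
  x (only x on D matters), and the set B of nodes blocked in round t+1.
  Each defined node sends its value to k nodes chosen independently and uniformly at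
  random; a node v that is blocked or receives fewer than l values becomes undefined;
  otherwise it picks l of its received values uniformly at random and takes their
  majority.\<close>
definition round_pmf ::
  "nat \<Rightarrow> nat \<Rightarrow> nat \<Rightarrow> nat set \<Rightarrow> nat set \<Rightarrow> (nat \<Rightarrow> bool) \<Rightarrow> (nat \<Rightarrow> bool option) pmf" where
  "round_pmf k l n D B x =
     do {
       dest \<leftarrow> Pi_pmf (messages k D) 0 (\<lambda>_. pmf_of_set {..<n});
       Pi_pmf {..<n} None (\<lambda>v.
         (let R = {m \<in> messages k D. dest m = v} in
          if v \<in> B \<or> card R < l then return_pmf None
          else map_pmf (\<lambda>S. Some (majority_of l x S))
                 (pmf_of_set {S. S \<subseteq> R \<and> card S = l})))
     }"

definition imbalance :: "nat \<Rightarrow> (nat \<Rightarrow> bool option) \<Rightarrow> real" where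
  "imbalance n y = (real (card {v \<in> {..<n}. y v = Some True})
                    - real (card {v \<in> {..<n}. y v = Some False})) / 2"

definition imbalance0 :: "nat set \<Rightarrow> (nat \<Rightarrow> bool) \<Rightarrow> real" where
  "imbalance0 D x = (real (card {u \<in> D. x u}) - real (card {u \<in> D. \<not> x u})) / 2"

definition stoch_dom :: "real pmf \<Rightarrow> real pmf \<Rightarrow> bool" where
  "stoch_dom p q = (\<forall>c. measure_pmf.prob q {z. c \<le> z} \<le> measure_pmf.prob p {z. c \<le> z})"

end

theory Submission
  imports Defs
begin

definition Rset :: "nat set \<Rightarrow> (nat \<times> nat \<Rightarrow> nat) \<Rightarrow> nat \<Rightarrow> (nat \<times> nat) set" where
  "Rset D d v = {m \<in> messages 6 D. d m = v}"

definition comp3 :: "nat set \<Rightarrow> nat set \<Rightarrow> (nat \<times> nat \<Rightarrow> nat) \<Rightarrow> nat \<Rightarrow> (nat \<times> nat) set option pmf" where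
  "comp3 D B d v = (if v \<in> B \<or> card (Rset D d v) < 3 then return_pmf None
      else map_pmf Some (pmf_of_set {S. S \<subseteq> Rset D d v \<and> card S = 3}))"

definition Qp :: "nat \<Rightarrow> nat set \<Rightarrow> nat set \<Rightarrow> (nat \<times> nat \<Rightarrow> nat) \<Rightarrow> (nat \<Rightarrow> (nat \<times> nat) set option) pmf" where
  "Qp n D B d = Pi_pmf {..<n} None (comp3 D B d)"

definition Pp :: "nat \<Rightarrow> nat set \<Rightarrow> nat set \<Rightarrow> (nat \<Rightarrow> (nat \<times> nat) set option) pmf" where
  "Pp n D B = Pi_pmf (messages 6 D) 0 (\<lambda>_. pmf_of_set {..<n}) \<bind> Qp n D B"

definition Gm :: "nat set \<Rightarrow> (nat \<Rightarrow> bool) \<Rightarrow> (nat \<times> nat) set \<Rightarrow> bool" where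
  "Gm D x S = majority_of 3 x (if finite S \<and> S \<subseteq> messages 6 D then S else {})"

definition Fm :: "nat set \<Rightarrow> (nat \<Rightarrow> bool) \<Rightarrow> (nat \<Rightarrow> (nat \<times> nat) set option) \<Rightarrow> (nat \<Rightarrow> bool option)" where
  "Fm D x c = map_option (Gm D x) \<circ> c"

lemma finite_messages: "finite D \<Longrightarrow> finite (messages k D)"
  by (simp add: messages_def)

lemma finite_Rset: "finite D \<Longrightarrow> finite (Rset D d v)"
  unfolding Rset_def using finite_messages by auto

lemma subs_ne: assumes "finite R" "\<not> card R < 3" shows "{S. S \<subseteq> R \<and> card S = 3} \<noteq> {}"
  using obtain_subset_with_card_n[of 3 R] assms by force

lemma subs_fin: assumes "finite R" shows "finite {S. S \<subseteq> R \<and> card S = 3}"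
  using assms by (rule finite_subset[rotated, OF finite_Pow_iff[THEN iffD2]]) auto

lemma rep:
  assumes "finite D"
  shows "round_pmf 6 3 n D B x = map_pmf (Fm D x) (Pp n D B)"
proof -
  have "Pi_pmf {..<n} None (\<lambda>v.
         (let R = {m \<in> messages 6 D. dest m = v} in
          if v \<in> B \<or> card R < 3 then return_pmf None
          else map_pmf (\<lambda>S. Some (majority_of 3 x S))
                 (pmf_of_set {S. S \<subseteq> R \<and> card S = 3})))
       = Pi_pmf {..<n} None (\<lambda>v. map_pmf (map_option (Gm D x)) (comp3 D B dest v))" for dest
  proof (rule Pi_pmf_cong)
    fix v
    show "(let R = {m \<in> messages 6 D. dest m = v} in
          if v \<in> B \<or> card R < 3 then return_pmf None
          else map_pmf (\<lambda>S. Some (majority_of 3 x S))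
                 (pmf_of_set {S. S \<subseteq> R \<and> card S = 3})) =
          map_pmf (map_option (Gm D x)) (comp3 D B dest v)"
    proof (cases "v \<in> B \<or> card (Rset D dest v) < 3")
      case True
      then show ?thesis by (simp add: comp3_def Rset_def[symmetric])
    next
      case False
      have fin: "finite (Rset D dest v)" using finite_Rset assms by blast
      have "map_pmf (\<lambda>S. Some (majority_of 3 x S)) (pmf_of_set {S. S \<subseteq> Rset D dest v \<and> card S = 3})
          = map_pmf (\<lambda>S. Some (Gm D x S)) (pmf_of_set {S. S \<subseteq> Rset D dest v \<and> card S = 3})"
      proof (rule map_pmf_cong[OF refl])
        fix S assume "S \<in> set_pmf (pmf_of_set {S. S \<subseteq> Rset D dest v \<and> card S = 3})"
        then have S: "S \<subseteq> Rset D dest v" "card S = 3"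
          using set_pmf_of_set[OF subs_ne[OF fin] subs_fin[OF fin]] False by auto
        then have "finite S" by (metis card.infinite zero_neq_numeral)
        moreover have "S \<subseteq> messages 6 D" using S unfolding Rset_def by auto
        ultimately show "Some (majority_of 3 x S) = Some (Gm D x S)" by (simp add: Gm_def)
      qed
      then show ?thesis using False
        by (simp add: comp3_def Rset_def[symmetric] map_pmf_comp Let_def)
    qed
  qed auto
  also have "\<dots> dest = map_pmf (Fm D x) (Qp n D B dest)" for dest
    unfolding Qp_def Fm_def by (rule Pi_pmf_map) auto
  finally show ?thesis
    unfolding round_pmf_def Pp_def map_bind_pmf by simp
qed

lemma sym_lemma:
  assumes finD: "finite D" and bs: "bij \<sigma>" and sD: "\<And>u. \<sigma> u \<in> D \<longleftrightarrow> u \<in> D"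
  shows "map_pmf (Fm D (x \<circ> \<sigma>)) (Pp n D B) = map_pmf (Fm D x) (Pp n D B)"
proof -
  define \<tau> :: "nat \<times> nat \<Rightarrow> nat \<times> nat" where "\<tau> = map_prod \<sigma> id"
  define M where "M = messages 6 D"
  have injt: "inj \<tau>" unfolding \<tau>_def using map_prod_inj_on[OF bij_is_inj[OF bs] inj_on_id[of UNIV]] by simp
  have tM: "\<tau> m \<in> M \<longleftrightarrow> m \<in> M" for m
    unfolding \<tau>_def M_def messages_def using sD by (cases m) auto
  have surjt: "surj \<tau>"
  proof -
    have "\<tau> (inv \<sigma> a, b) = (a, b)" for a b
      unfolding \<tau>_def using surj_f_inv_f[OF bij_is_surj[OF bs]] by simp
    then have "\<tau> (case p of (a, b) \<Rightarrow> (inv \<sigma> a, b)) = p" for p by (cases p) simp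
    then show ?thesis by (rule surjI)
  qed
  have tMM: "\<tau> ` M = M"
  proof
    show "\<tau> ` M \<subseteq> M" using tM by blast
    show "M \<subseteq> \<tau> ` M"
    proof
      fix m assume "m \<in> M"
      obtain m' where "m = \<tau> m'" using surjt by (metis surjD)
      then show "m \<in> \<tau> ` M" using tM \<open>m \<in> M\<close> by (metis imageI)
    qed
  qed
  have bijM: "bij_betw \<tau> M M" using inj_on_subset[OF injt subset_UNIV] tMM by (simp add: bij_betw_def)
  define T where "T = (\<lambda>c::nat \<Rightarrow> (nat \<times> nat) set option. map_option (image \<tau>) \<circ> c)"
  have G: "Gm D (x \<circ> \<sigma>) S = Gm D x (\<tau> ` S)" for S
  proof (cases "finite S \<and> S \<subseteq> M")
    case True
    then have "finite (\<tau> ` S) \<and> \<tau> ` S \<subseteq> M" using tM by auto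
    moreover have "{m \<in> \<tau> ` S. x (fst m)} = \<tau> ` {m \<in> S. (x \<circ> \<sigma>) (fst m)}"
      unfolding \<tau>_def by force
    moreover have "card (\<tau> ` {m \<in> S. (x \<circ> \<sigma>) (fst m)}) = card {m \<in> S. (x \<circ> \<sigma>) (fst m)}"
      using injt by (simp add: card_image inj_on_subset)
    ultimately show ?thesis using True unfolding Gm_def majority_of_def M_def by simp
  next
    case False
    have "\<not> (finite (\<tau> ` S) \<and> \<tau> ` S \<subseteq> M)"
      using False injt tM by (auto dest: finite_imageD[OF _ inj_on_subset[OF injt]])
    then have c2: "\<not> (finite (\<tau> ` S) \<and> \<tau> ` S \<subseteq> messages 6 D)" unfolding M_def .
    have c1: "\<not> (finite S \<and> S \<subseteq> messages 6 D)" using False unfolding M_def .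
    show ?thesis unfolding Gm_def if_not_P[OF c1] if_not_P[OF c2] by (simp add: majority_of_def)
  qed
  have F: "Fm D (x \<circ> \<sigma>) = Fm D x \<circ> T"
  proof -
    have G': "Gm D (x \<circ> \<sigma>) = Gm D x \<circ> image \<tau>" by (rule ext) (simp only: G comp_apply)
    show ?thesis unfolding Fm_def T_def G' by (simp add: fun_eq_iff option.map_comp)
  qed
  have R: "\<tau> ` Rset D (d \<circ> \<tau>) v = Rset D d v" for d v
  proof -
    have "Rset D (d \<circ> \<tau>) v = {m \<in> M. d (\<tau> m) = v}" unfolding Rset_def M_def by simp
    moreover have "\<tau> ` {m \<in> M. d (\<tau> m) = v} = {m \<in> M. d m = v}"
    proof
      show "\<tau> ` {m \<in> M. d (\<tau> m) = v} \<subseteq> {m \<in> M. d m = v}" using tM by blast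
      show "{m \<in> M. d m = v} \<subseteq> \<tau> ` {m \<in> M. d (\<tau> m) = v}"
      proof
        fix m assume m: "m \<in> {m \<in> M. d m = v}"
        obtain m' where m': "m = \<tau> m'" using surjt by (metis surjD)
        have "m' \<in> {m \<in> M. d (\<tau> m) = v}" using m m' tM by blast
        then show "m \<in> \<tau> ` {m \<in> M. d (\<tau> m) = v}" using m' by blast
      qed
    qed
    ultimately show ?thesis unfolding Rset_def M_def by simp
  qed
  have cR: "card (Rset D (d \<circ> \<tau>) v) = card (Rset D d v)" for d v
    using R[of d v] card_image[OF inj_on_subset[OF injt]] by (metis subset_UNIV)
  have subsimg: "image \<tau> ` {S. S \<subseteq> A \<and> card S = 3} = {S. S \<subseteq> \<tau> ` A \<and> card S = 3}" for A
  proof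
    show "image \<tau> ` {S. S \<subseteq> A \<and> card S = 3} \<subseteq> {S. S \<subseteq> \<tau> ` A \<and> card S = 3}"
      using card_image[OF inj_on_subset[OF injt]] by auto
    show "{S. S \<subseteq> \<tau> ` A \<and> card S = 3} \<subseteq> image \<tau> ` {S. S \<subseteq> A \<and> card S = 3}"
    proof
      fix S assume S: "S \<in> {S. S \<subseteq> \<tau> ` A \<and> card S = 3}"
      define S' where "S' = \<tau> -` S"
      have "\<tau> ` S' = S" unfolding S'_def using surjt by (simp add: surj_image_vimage_eq)
      moreover have "S' \<subseteq> A"
      proof
        fix m assume "m \<in> S'"
        then have "\<tau> m \<in> \<tau> ` A" using S unfolding S'_def by blast
        then show "m \<in> A" using inj_image_mem_iff[OF injt] by blast
      qed
      moreover have "card S' = 3"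
      proof -
        have "card (\<tau> ` S') = card S'" by (rule card_image[OF inj_on_subset[OF injt subset_UNIV]])
        then show ?thesis using \<open>\<tau> ` S' = S\<close> S by simp
      qed
      ultimately have "S' \<in> {S. S \<subseteq> A \<and> card S = 3}" "\<tau> ` S' = S" by simp_all
      then show "S \<in> image \<tau> ` {S. S \<subseteq> A \<and> card S = 3}" by (metis imageI)
    qed
  qed
  have injimg: "inj_on (image \<tau>) X" for X
    unfolding inj_on_def using inj_image_eq_iff[OF injt] by blast
  have Q: "map_pmf T (Qp n D B (d \<circ> \<tau>)) = Qp n D B d" for d
  proof -
    have "map_pmf T (Qp n D B (d \<circ> \<tau>)) =
        Pi_pmf {..<n} None (\<lambda>v. map_pmf (map_option (image \<tau>)) (comp3 D B (d \<circ> \<tau>) v))"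
      unfolding Qp_def T_def by (rule Pi_pmf_map[symmetric]) auto
    also have "\<dots> = Qp n D B d" unfolding Qp_def
    proof (rule Pi_pmf_cong)
      fix v
      show "map_pmf (map_option (image \<tau>)) (comp3 D B (d \<circ> \<tau>) v) = comp3 D B d v"
      proof (cases "v \<in> B \<or> card (Rset D d v) < 3")
        case True
        then show ?thesis by (simp add: comp3_def cR)
      next
        case False
        have fin: "finite (Rset D (d \<circ> \<tau>) v)" using finite_Rset finD by blast
        have "map_pmf (image \<tau>) (pmf_of_set {S. S \<subseteq> Rset D (d \<circ> \<tau>) v \<and> card S = 3})
            = pmf_of_set (image \<tau> ` {S. S \<subseteq> Rset D (d \<circ> \<tau>) v \<and> card S = 3})"
          by (rule map_pmf_of_set_inj[OF injimg subs_ne[OF fin] subs_fin[OF fin]])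
             (use False cR in auto)
        then have "map_pmf (image \<tau>) (pmf_of_set {S. S \<subseteq> Rset D (d \<circ> \<tau>) v \<and> card S = 3})
            = pmf_of_set {S. S \<subseteq> Rset D d v \<and> card S = 3}" by (simp only: subsimg R)
        then have "map_pmf Some (map_pmf (image \<tau>) (pmf_of_set {S. S \<subseteq> Rset D (d \<circ> \<tau>) v \<and> card S = 3}))
            = map_pmf Some (pmf_of_set {S. S \<subseteq> Rset D d v \<and> card S = 3})" by simp
        then have h2: "map_pmf (\<lambda>S. Some (\<tau> ` S)) (pmf_of_set {S. S \<subseteq> Rset D (d \<circ> \<tau>) v \<and> card S = 3})
            = map_pmf Some (pmf_of_set {S. S \<subseteq> Rset D d v \<and> card S = 3})" by (simp add: map_pmf_comp)
        show ?thesis using False h2 by (simp add: comp3_def cR map_pmf_comp)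
      qed
    qed auto
    finally show ?thesis .
  qed
  have Pi: "Pi_pmf M 0 (\<lambda>_. pmf_of_set {..<n}) =
      map_pmf (\<lambda>g. g \<circ> \<tau>) (Pi_pmf M 0 (\<lambda>_. pmf_of_set {..<n}))"
    by (rule Pi_pmf_bij_betw) (use finD bijM tM in \<open>auto simp: M_def finite_messages\<close>)
  have "map_pmf T (Pp n D B) = Pp n D B"
  proof -
    have "Pp n D B = Pi_pmf M 0 (\<lambda>_. pmf_of_set {..<n}) \<bind> (\<lambda>d. Qp n D B (d \<circ> \<tau>))"
      unfolding Pp_def M_def[symmetric] by (subst Pi) (simp add: bind_map_pmf)
    then show ?thesis unfolding Pp_def M_def[symmetric] by (simp add: map_bind_pmf Q)
  qed
  then show ?thesis by (simp add: F pmf.map_comp[symmetric])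
qed


lemma mono_F:
  assumes "\<And>u. u \<in> D \<Longrightarrow> y u \<Longrightarrow> x u"
  shows "imbalance n (Fm D y c) \<le> imbalance n (Fm D x c)"
proof -
  have GM: "Gm D y S \<Longrightarrow> Gm D x S" for S
  proof -
    define S0 where "S0 = (if finite S \<and> S \<subseteq> messages 6 D then S else {})"
    have f: "finite S0" and s: "S0 \<subseteq> messages 6 D" unfolding S0_def by auto
    have "{m \<in> S0. y (fst m)} \<subseteq> {m \<in> S0. x (fst m)}"
      using s assms unfolding messages_def by auto
    then have "card {m \<in> S0. y (fst m)} \<le> card {m \<in> S0. x (fst m)}"
      using f by (intro card_mono) auto
    then show "Gm D y S \<Longrightarrow> Gm D x S" unfolding Gm_def S0_def[symmetric] majority_of_def by linarith
  qed
  have s1: "{v \<in> {..<n}. Fm D y c v = Some True} \<subseteq> {v \<in> {..<n}. Fm D x c v = Some True}"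
    using GM by (auto simp: Fm_def)
  have s2: "{v \<in> {..<n}. Fm D x c v = Some False} \<subseteq> {v \<in> {..<n}. Fm D y c v = Some False}"
    using GM by (auto simp: Fm_def)
  have "card {v \<in> {..<n}. Fm D y c v = Some True} \<le> card {v \<in> {..<n}. Fm D x c v = Some True}"
    by (rule card_mono[OF _ s1]) auto
  moreover have "card {v \<in> {..<n}. Fm D x c v = Some False} \<le> card {v \<in> {..<n}. Fm D y c v = Some False}"
    by (rule card_mono[OF _ s2]) auto
  ultimately show ?thesis unfolding imbalance_def by (simp add: divide_right_mono)
qed

lemma card_split: "finite D \<Longrightarrow> card {u \<in> D. P u} + card {u \<in> D. \<not> P u} = card D"
proof -
  assume "finite D"
  have "{u \<in> D. P u} \<union> {u \<in> D. \<not> P u} = D" by auto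
  moreover have "card ({u \<in> D. P u} \<union> {u \<in> D. \<not> P u}) = card {u \<in> D. P u} + card {u \<in> D. \<not> P u}"
    by (rule card_Un_disjoint) (use \<open>finite D\<close> in auto)
  ultimately show ?thesis by simp
qed

theorem lemma5:
  fixes n :: nat and D B :: "nat set" and x x' :: "nat \<Rightarrow> bool"
  assumes "0 < n"
    and "D \<subseteq> {..<n}"
    and "B \<subseteq> {..<n}"
    and "imbalance0 D x \<ge> imbalance0 D x'"
    and "imbalance0 D x' \<ge> 0"
  shows "stoch_dom (map_pmf (imbalance n) (round_pmf 6 3 n D B x))
                   (map_pmf (imbalance n) (round_pmf 6 3 n D B x'))"
proof -
  have finD: "finite D" using assms(2) finite_subset by blast
  define A where "A = {u \<in> D. x u}"
  define A' where "A' = {u \<in> D. x' u}"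
  have c1: "card A + card {u \<in> D. \<not> x u} = card D" unfolding A_def by (rule card_split[OF finD])
  have c2: "card A' + card {u \<in> D. \<not> x' u} = card D" unfolding A'_def by (rule card_split[OF finD])
  have c1': "real (card A) + real (card {u \<in> D. \<not> x u}) = real (card D)" using c1 of_nat_add by metis
  have c2': "real (card A') + real (card {u \<in> D. \<not> x' u}) = real (card D)" using c2 of_nat_add by metis
  have e: "real (card A') - real (card {u \<in> D. \<not> x' u}) \<le> real (card A) - real (card {u \<in> D. \<not> x u})"
    using assms(4) unfolding imbalance0_def A_def[symmetric] A'_def[symmetric] by simp
  have "real (card A') \<le> real (card A)" using e c1' c2' by linarith
  then have "card A' \<le> card A" by simp
  then obtain C where C: "C \<subseteq> A" "card C = card A'" "finite C" by (rule obtain_subset_with_card_n)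
  have CD: "C \<subseteq> D" and A'D: "A' \<subseteq> D" using C unfolding A_def A'_def by auto
  have finA': "finite A'" using finD A'D finite_subset by blast
  obtain f1 where f1: "bij_betw f1 C A'" using finite_same_card_bij[OF C(3) finA' C(2)] by blast
  have "card (D - C) = card (D - A')"
    using card_Diff_subset[OF C(3) CD] card_Diff_subset[OF finA' A'D] C(2) by simp
  then obtain f2 where f2: "bij_betw f2 (D - C) (D - A')"
    using finite_same_card_bij[of "D - C" "D - A'"] finD by blast
  define \<sigma> where "\<sigma> u = (if u \<in> C then f1 u else if u \<in> D then f2 u else u)" for u
  have b1: "bij_betw \<sigma> C A'" using f1 by (rule bij_betw_cong[THEN iffD1, rotated]) (simp add: \<sigma>_def)
  have b2: "bij_betw \<sigma> (D - C) (D - A')" using f2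
    by (rule bij_betw_cong[THEN iffD1, rotated]) (simp add: \<sigma>_def)
  have b3: "bij_betw \<sigma> (- D) (- D)"
    by (rule bij_betw_cong[THEN iffD1, of _ id]) (use CD in \<open>auto simp: \<sigma>_def\<close>)
  have "bij_betw \<sigma> (C \<union> (D - C) \<union> - D) (A' \<union> (D - A') \<union> - D)"
    by (rule bij_betw_combine[OF bij_betw_combine[OF b1 b2] b3]) (use A'D in auto)
  moreover have "C \<union> (D - C) \<union> - D = UNIV" "A' \<union> (D - A') \<union> - D = UNIV" by auto
  ultimately have bs: "bij \<sigma>" by simp
  have sD: "\<sigma> u \<in> D \<longleftrightarrow> u \<in> D" for u
  proof (cases "u \<in> C")
    case True then show ?thesis using b1 A'D CD by (auto dest: bij_betwE)
  next
    case False
    show ?thesis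
    proof (cases "u \<in> D")
      case True then show ?thesis using False b2 by (auto dest: bij_betwE)
    next
      case F2: False then show ?thesis using False by (simp add: \<sigma>_def)
    qed
  qed
  have mono: "(x' \<circ> \<sigma>) u \<Longrightarrow> x u" if "u \<in> D" for u
  proof (cases "u \<in> C")
    case True then show "x u" using C(1) unfolding A_def by auto
  next
    case False
    then have "\<sigma> u \<in> D - A'" using b2 that by (auto dest: bij_betwE)
    then show "(x' \<circ> \<sigma>) u \<Longrightarrow> x u" unfolding A'_def by auto
  qed
  have r1: "round_pmf 6 3 n D B x = map_pmf (Fm D x) (Pp n D B)" by (rule rep[OF finD])
  have r2: "round_pmf 6 3 n D B x' = map_pmf (Fm D (x' \<circ> \<sigma>)) (Pp n D B)"
    using rep[OF finD] sym_lemma[OF finD bs sD] by simp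
  show ?thesis unfolding stoch_dom_def r1 r2
  proof
    fix c :: real
    have "{\<omega>. c \<le> imbalance n (Fm D (x' \<circ> \<sigma>) \<omega>)} \<subseteq> {\<omega>. c \<le> imbalance n (Fm D x \<omega>)}"
      using mono_F[of D "x' \<circ> \<sigma>" x n, OF mono] order_trans by blast
    then have "measure_pmf.prob (Pp n D B) {\<omega>. c \<le> imbalance n (Fm D (x' \<circ> \<sigma>) \<omega>)}
        \<le> measure_pmf.prob (Pp n D B) {\<omega>. c \<le> imbalance n (Fm D x \<omega>)}"
      by (rule measure_pmf.finite_measure_mono) simp
    then show "measure_pmf.prob (map_pmf (imbalance n) (map_pmf (Fm D (x' \<circ> \<sigma>)) (Pp n D B))) {z. c \<le> z}
        \<le> measure_pmf.prob (map_pmf (imbalance n) (map_pmf (Fm D x) (Pp n D B))) {z. c \<le> z}"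
      by (simp add: map_pmf_comp vimage_def)
  qed
qed

end
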